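(* Suppose that $k\geq2$ is an integer, that $q_1,\ldots,q_k$ are positive integers, and that for each $1\leq i\leq k$, $C_i$ and $D_i$ are integers satisfying $D_i-C_i\geq\max_{1\leq j\leq k}q_j$. Let $r=\gcd(q_1,\ldots,q_k)$, \[\mathcal{A}=\Big\{\sum_{i=1}^k a_iq_i \;:\; a_i\in\mathbb{Z},\ C_i\leq a_i\leq D_i\Big\},\qquad C=\sum_{i=1}^kC_iq_i,\qquad D=\sum_{i=1}^kD_iq_i .\] Then \[\mathcal{A}\subset\Big\{mr \;:\; m\in\mathbb{Z},\ \frac{C}{r}\leq m\leq\frac{D}{r}\Big\}\] and \[\Big\{mr \;:\; m\in\mathbb{Z},\ \frac{C}{r}+\frac1{r^2}\sum_{i=1}^{k-1}q_iq_{i+1}\leq m\leq\frac{D}{r}-\frac1{r^2}\sum_{i=1}^{k-1}q_iq_{i+1}\Big\}\subset\mathcal{A}.\] *)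

theory Defs
  imports Complex_Main
begin

end

theory Submission
  imports Defs
begin

definition rr :: "(nat \<Rightarrow> int) \<Rightarrow> nat \<Rightarrow> int" where
  "rr q j = Gcd (q ` {1..j})"

fun lo :: "(nat \<Rightarrow> int) \<Rightarrow> nat \<Rightarrow> int" where
  "lo q 0 = 0"
| "lo q (Suc j) = (if j = 0 then 0 else lo q j + (rr q j div rr q (Suc j) - 1) * q (Suc j))"

lemma rr_Suc: "rr q (Suc j) = gcd (rr q j) (q (Suc j))"
  unfolding rr_def by (simp add: atLeastAtMostSuc_conv Gcd_insert gcd.commute)

lemma rr_one: "q 1 > 0 \<Longrightarrow> rr q 1 = q 1"
  unfolding rr_def by simp

context
  fixes q L :: "nat \<Rightarrow> int" and Q :: int and k :: nat
  assumes qpos: "\<And>i. i \<in> {1..k} \<Longrightarrow> q i > 0"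
    and qle: "\<And>i. i \<in> {1..k} \<Longrightarrow> q i \<le> Q"
    and Lge: "\<And>i. i \<in> {1..k} \<Longrightarrow> L i \<ge> Q"
begin

lemma rr_props:
  assumes "1 \<le> j" "j \<le> k"
  shows "rr q j > 0" "\<And>i. i \<in> {1..j} \<Longrightarrow> rr q j dvd q i" "rr q j \<le> Q"
proof -
  show dv: "\<And>i. i \<in> {1..j} \<Longrightarrow> rr q j dvd q i" unfolding rr_def by simp
  have q1: "q 1 > 0" using qpos assms by auto
  have "q 1 \<in> q ` {1..j}" using assms by auto
  then have "rr q j \<noteq> 0" unfolding rr_def using q1 by (auto simp: Gcd_0_iff)
  moreover have "rr q j \<ge> 0" unfolding rr_def by simp
  ultimately show pos: "rr q j > 0" by simp
  have "rr q j dvd q 1" using dv assms by simp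
  then have "rr q j \<le> q 1" using q1 by (simp add: zdvd_imp_le)
  also have "q 1 \<le> Q" using qle assms by simp
  finally show "rr q j \<le> Q" .
qed

lemma lo_inv:
  assumes "1 \<le> j"
  shows "j \<le> k \<longrightarrow> 2 * lo q j + rr q j * Q \<le> Q * (\<Sum>i=1..j. q i)
     \<and> lo q j * rr q j \<le> (\<Sum>i=1..j-1. q i * q (i+1)) \<and> rr q j dvd lo q j \<and> lo q j \<ge> 0"
  using assms
proof (induction j rule: nat_induct_at_least)
  case base
  show ?case
  proof
    assume "1 \<le> k"
    then have "q 1 > 0" using qpos[of 1] by auto
    then have "rr q 1 = q 1" by (intro rr_one)
    then show "2 * lo q 1 + rr q 1 * Q \<le> Q * (\<Sum>i=1..1. q i)
     \<and> lo q 1 * rr q 1 \<le> (\<Sum>i=1..1-1. q i * q (i+1)) \<and> rr q 1 dvd lo q 1 \<and> lo q 1 \<ge> 0"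
      by (simp add: mult.commute)
  qed
next
  case (Suc j)
  show ?case
  proof
    assume jk: "Suc j \<le> k"
    have IH: "2 * lo q j + rr q j * Q \<le> Q * (\<Sum>i=1..j. q i)"
       "lo q j * rr q j \<le> (\<Sum>i=1..j-1. q i * q (i+1))" "rr q j dvd lo q j" "lo q j \<ge> 0"
      using Suc jk by auto
    define \<alpha> where "\<alpha> = rr q j"
    define \<beta> where "\<beta> = q (Suc j)"
    define g where "g = rr q (Suc j)"
    define p where "p = \<alpha> div g"
    have apos: "\<alpha> > 0" "\<alpha> \<le> Q" using rr_props[of j] Suc jk unfolding \<alpha>_def
      by auto
    have "\<alpha> dvd q j" "q j > 0" using rr_props(2)[of j j] qpos[of j] Suc jk unfolding \<alpha>_def by auto
    then have apos3: "\<alpha> \<le> q j" by (simp add: zdvd_imp_le)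
    have gpos: "g > 0" using rr_props[of "Suc j"] Suc jk unfolding g_def by auto
    have bpos: "\<beta> > 0" "\<beta> \<le> Q" using qpos[of "Suc j"] qle[of "Suc j"] jk unfolding \<beta>_def by auto
    have gg: "g = gcd \<alpha> \<beta>" unfolding g_def \<alpha>_def \<beta>_def by (simp add: rr_Suc)
    have gda: "g dvd \<alpha>" "g dvd \<beta>" using gg by auto
    have ap: "\<alpha> = p * g" using gda unfolding p_def by simp
    have "p > 0" using ap apos gpos by (simp add: zero_less_mult_iff)
    then have p1: "p \<ge> 1" by simp
    have "p * 1 \<le> p * g" using gpos p1 by (intro mult_left_mono) auto
    then have "p \<le> \<alpha>" using ap by simp
    have "1 * g \<le> p * g" using gpos p1 by (intro mult_right_mono) auto
    then have glea: "g \<le> \<alpha>" using ap by simp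
    have lo_eq: "lo q (Suc j) = lo q j + (p - 1) * \<beta>"
      using Suc unfolding p_def \<alpha>_def g_def \<beta>_def by simp
    have sumq: "(\<Sum>i=1..Suc j. q i) = (\<Sum>i=1..j. q i) + \<beta>" unfolding \<beta>_def by simp
    have sumS: "(\<Sum>i=1..Suc j - 1. q i * q (i+1)) = (\<Sum>i=1..j-1. q i * q (i+1)) + q j * \<beta>"
      using Suc unfolding \<beta>_def by (cases j) auto
    have f1: "(p-1)*\<beta> \<le> (p-1)*g*Q"
    proof -
      have "1 * Q \<le> g * Q" using bpos gpos by (intro mult_right_mono) auto
      then have "\<beta> \<le> g * Q" using bpos by linarith
      then have "(p-1)*\<beta> \<le> (p-1)*(g*Q)" using p1 by (intro mult_left_mono) auto
      then show ?thesis by (simp add: mult.assoc)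
    qed
    have f2: "(p-1)*\<beta> \<le> Q*\<beta>" using p1 \<open>p \<le> \<alpha>\<close> apos bpos by (intro mult_right_mono) auto
    have f3: "(p-1)*g*Q + g*Q = \<alpha>*Q" using ap by (simp add: algebra_simps)
    have c1: "2 * lo q (Suc j) + rr q (Suc j) * Q \<le> Q * (\<Sum>i=1..Suc j. q i)"
    proof -
      have e: "Q * (\<Sum>i=1..Suc j. q i) = Q * (\<Sum>i=1..j. q i) + Q * \<beta>" unfolding sumq by (simp add: algebra_simps)
      have e2: "rr q (Suc j) * Q = g * Q" "rr q j * Q = \<alpha> * Q" unfolding g_def \<alpha>_def by auto
      have "2*((p-1)*\<beta>) + g*Q \<le> \<alpha>*Q + Q*\<beta>"
      proof -
        obtain X Y where "X = (p-1)*\<beta>" "Y = (p-1)*g*Q" by blast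
        then show ?thesis using f1 f2 f3 by linarith
      qed
      then show ?thesis unfolding lo_eq e e2 using IH(1) unfolding e2 by (simp add: algebra_simps)
    qed
    have f4: "lo q j * g \<le> lo q j * \<alpha>" using IH(4) glea by (simp add: mult_left_mono)
    have f5: "(p-1)*\<beta>*g \<le> \<alpha> * \<beta>" using ap bpos gpos by (simp add: algebra_simps)
    have f6: "\<alpha> * \<beta> \<le> q j * \<beta>" using apos3 bpos by simp
    have c2: "lo q (Suc j) * rr q (Suc j) \<le> (\<Sum>i=1..Suc j - 1. q i * q (i+1))"
      using IH(2) f4 f5 f6 unfolding lo_eq sumS g_def[symmetric] \<alpha>_def[symmetric]
      by (simp add: algebra_simps)
    have c3: "rr q (Suc j) dvd lo q (Suc j)" unfolding lo_eq g_def[symmetric]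
      using IH(3) gda unfolding \<alpha>_def[symmetric] by (meson dvd_add dvd_mult dvd_trans)
    have c4: "lo q (Suc j) \<ge> 0" unfolding lo_eq using IH(4) p1 bpos by simp
    show "2 * lo q (Suc j) + rr q (Suc j) * Q \<le> Q * (\<Sum>i=1..Suc j. q i)
     \<and> lo q (Suc j) * rr q (Suc j) \<le> (\<Sum>i=1..Suc j-1. q i * q (i+1)) \<and> rr q (Suc j) dvd lo q (Suc j) \<and> lo q (Suc j) \<ge> 0"
      using c1 c2 c3 c4 by blast
  qed
qed

lemma main_rep:
  assumes "1 \<le> j"
  shows "j \<le> k \<longrightarrow> (\<forall>z. rr q j dvd z \<and> lo q j \<le> z \<and> z \<le> (\<Sum>i=1..j. L i * q i) - lo q j \<longrightarrow>
     (\<exists>b. (\<forall>i\<in>{1..j}. 0 \<le> b i \<and> b i \<le> L i) \<and> z = (\<Sum>i=1..j. b i * q i)))"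
  using assms
proof (induction j rule: nat_induct_at_least)
  case base
  show ?case
  proof (intro impI allI)
    fix z
    assume k1: "1 \<le> k" and hz: "rr q 1 dvd z \<and> lo q 1 \<le> z \<and> z \<le> (\<Sum>i=1..1. L i * q i) - lo q 1"
    then have q1: "q 1 > 0" using qpos[of 1] by auto
    then have "rr q 1 = q 1" by (intro rr_one)
    with hz obtain w where w: "z = q 1 * w" by auto
    have "0 \<le> q 1 * w" "q 1 * w \<le> L 1 * q 1" using hz w by auto
    then have "0 \<le> w" "w \<le> L 1" using q1
      by (auto simp: zero_le_mult_iff mult.commute[of "L 1"])
    then show "\<exists>b. (\<forall>i\<in>{1..1}. 0 \<le> b i \<and> b i \<le> L i) \<and> z = (\<Sum>i=1..1. b i * q i)"
      using w by (intro exI[of _ "\<lambda>_. w"]) (auto simp: mult.commute)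
  qed
next
  case (Suc j)
  show ?case
  proof (intro impI allI)
    fix z
    assume jk: "Suc j \<le> k" and hz: "rr q (Suc j) dvd z \<and> lo q (Suc j) \<le> z \<and> z \<le> (\<Sum>i=1..Suc j. L i * q i) - lo q (Suc j)"
    have IH: "\<And>z. rr q j dvd z \<Longrightarrow> lo q j \<le> z \<Longrightarrow> z \<le> (\<Sum>i=1..j. L i * q i) - lo q j \<Longrightarrow>
     (\<exists>b. (\<forall>i\<in>{1..j}. 0 \<le> b i \<and> b i \<le> L i) \<and> z = (\<Sum>i=1..j. b i * q i))"
      using Suc jk by auto
    have inv: "2 * lo q j + rr q j * Q \<le> Q * (\<Sum>i=1..j. q i)" "lo q j \<ge> 0"
      using lo_inv[of j] Suc jk by auto
    define T where "T = (\<Sum>i=1..j. L i * q i)"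
    define \<alpha> where "\<alpha> = rr q j"
    define \<beta> where "\<beta> = q (Suc j)"
    define g where "g = rr q (Suc j)"
    define p where "p = \<alpha> div g"
    define L' where "L' = L (Suc j)"
    define l where "l = lo q j"
    have apos: "\<alpha> > 0" "\<alpha> \<le> Q" using rr_props[of j] Suc jk unfolding \<alpha>_def
      by auto
    have gpos: "g > 0" using rr_props[of "Suc j"] Suc jk unfolding g_def by auto
    have bpos: "\<beta> > 0" "\<beta> \<le> Q" using qpos[of "Suc j"] qle[of "Suc j"] jk unfolding \<beta>_def by auto
    have L'Q: "L' \<ge> Q" using Lge[of "Suc j"] jk unfolding L'_def by auto
    have gg: "g = gcd \<alpha> \<beta>" unfolding g_def \<alpha>_def \<beta>_def by (simp add: rr_Suc)
    have gda: "g dvd \<alpha>" "g dvd \<beta>" using gg by auto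
    have ap: "\<alpha> = p * g" using gda unfolding p_def by simp
    have "p > 0" using ap apos gpos by (simp add: zero_less_mult_iff)
    then have p1: "p \<ge> 1" by simp
    have "p * 1 \<le> p * g" using gpos p1 by (intro mult_left_mono) auto
    then have pa: "p \<le> \<alpha>" using ap by simp
    have TQ: "T \<ge> Q * (\<Sum>i=1..j. q i)" unfolding T_def sum_distrib_left
    proof (rule sum_mono)
      fix i assume "i \<in> {1..j}"
      then have "i \<in> {1..k}" using jk by auto
      then show "Q * q i \<le> L i * q i" using Lge[of i] qpos[of i] by (simp add: mult_right_mono)
    qed
    have pbQ: "p * \<beta> \<le> \<alpha> * Q" using pa bpos apos p1 by (simp add: mult_mono)
    have gap: "T - 2 * l \<ge> p * \<beta>" using inv TQ pbQ unfolding l_def \<alpha>_def by linarith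
    have lo_eq: "lo q (Suc j) = l + (p - 1) * \<beta>"
      using Suc unfolding p_def \<alpha>_def g_def \<beta>_def l_def by simp
    have T_eq: "(\<Sum>i=1..Suc j. L i * q i) = T + L' * \<beta>" unfolding T_def L'_def \<beta>_def by simp
    have zlo: "l + (p-1)*\<beta> \<le> z" and zhi: "z \<le> T + L' * \<beta> - l - (p-1)*\<beta>" and gz: "g dvd z"
      using hz unfolding lo_eq T_eq g_def by auto
    obtain u v where uv: "u * \<alpha> + v * \<beta> = g" using bezout_int[of \<alpha> \<beta>] gg by auto
    obtain w where w: "z = g * w" using gz by auto
    define c0 where "c0 = v * w"
    have c0d: "\<alpha> dvd z - c0 * \<beta>"
    proof -
      have "z - c0 * \<beta> = (u * w) * \<alpha>" unfolding w c0_def using uv[symmetric] by (simp add: algebra_simps)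
      then show ?thesis by simp
    qed
    define U where "U = min L' ((z - l) div \<beta>)"
    define c where "c = U - (U - c0) mod p"
    have "c - c0 = (U - c0) - (U - c0) mod p" unfolding c_def by simp
    also have "\<dots> = p * ((U - c0) div p)" by (rule minus_mod_eq_mult_div)
    finally have cmod: "c - c0 = p * ((U - c0) div p)" .
    obtain \<beta>' where b': "\<beta> = g * \<beta>'" using gda by auto
    have pb: "p * \<beta> = \<alpha> * \<beta>'" unfolding b' ap by (simp add: algebra_simps)
    have cd: "\<alpha> dvd z - c * \<beta>"
    proof -
      have "z - c * \<beta> = (z - c0 * \<beta>) - (c - c0) * \<beta>" by (simp add: algebra_simps)
      also have "\<dots> = (z - c0 * \<beta>) - \<alpha> * (\<beta>' * ((U - c0) div p))" unfolding cmod
        using pb by (simp add: algebra_simps)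
      finally have eq: "z - c * \<beta> = (z - c0 * \<beta>) - \<alpha> * (\<beta>' * ((U - c0) div p))" .
      have "\<alpha> dvd (z - c0 * \<beta>) - \<alpha> * (\<beta>' * ((U - c0) div p))" by (intro dvd_diff c0d) simp
      then show ?thesis unfolding eq .
    qed
    have m1: "0 \<le> (U - c0) mod p" "(U - c0) mod p < p" using \<open>p > 0\<close> by auto
    have cU: "c \<le> U" "c \<ge> U - p + 1" unfolding c_def using m1 by auto
    have "(p - 1) * \<beta> div \<beta> \<le> (z - l) div \<beta>" using zlo bpos by (intro zdiv_mono1) auto
    then have U1: "p - 1 \<le> (z - l) div \<beta>" using bpos by simp
    have U2: "p - 1 \<le> L'" using pa apos L'Q by linarith
    have c0': "c \<ge> 0" using cU U1 U2 unfolding U_def by linarith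
    have cL: "c \<le> L'" using cU unfolding U_def by linarith
    have cz: "c \<le> (z - l) div \<beta>" using cU unfolding U_def by linarith
    have "c * \<beta> \<le> ((z - l) div \<beta>) * \<beta>" using cz bpos by (simp add: mult_right_mono)
    also have "\<dots> \<le> z - l" using bpos by (simp add: minus_mod_eq_div_mult[symmetric])
    finally have lo_ok: "l \<le> z - c * \<beta>" by linarith
    have hi_ok: "z - c * \<beta> \<le> T - l"
    proof (cases "L' \<le> (z - l) div \<beta>")
      case True
      then have "c \<ge> L' - p + 1" using cU unfolding U_def by simp
      then have "c * \<beta> \<ge> (L' - p + 1) * \<beta>" using bpos by (simp add: mult_right_mono)
      then show ?thesis using zhi by (simp add: algebra_simps)
    next
      case False
      then have "c \<ge> (z - l) div \<beta> - p + 1" using cU unfolding U_def by simp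
      then have "c * \<beta> \<ge> ((z - l) div \<beta> - p + 1) * \<beta>" using bpos by (simp add: mult_right_mono)
      moreover have "z - l < ((z - l) div \<beta> + 1) * \<beta>"
      proof -
        have e: "z - l = ((z - l) div \<beta>) * \<beta> + (z - l) mod \<beta>" by simp
        have "(z - l) mod \<beta> < \<beta>" using bpos by simp
        moreover have "((z - l) div \<beta> + 1) * \<beta> = (z - l) div \<beta> * \<beta> + \<beta>" by (simp add: distrib_right)
        ultimately show ?thesis using e by linarith
      qed
      ultimately have "z - c * \<beta> < l + p * \<beta>" by (simp add: algebra_simps)
      then show ?thesis using gap by linarith
    qed
    obtain b where b: "\<forall>i\<in>{1..j}. 0 \<le> b i \<and> b i \<le> L i" "z - c * \<beta> = (\<Sum>i=1..j. b i * q i)"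
      using IH[of "z - c * \<beta>"] cd lo_ok hi_ok unfolding \<alpha>_def l_def T_def by blast
    define b2 where "b2 = b(Suc j := c)"
    have s2: "(\<Sum>i=1..j. b2 i * q i) = (\<Sum>i=1..j. b i * q i)" unfolding b2_def by (intro sum.cong) auto
    show "\<exists>b. (\<forall>i\<in>{1..Suc j}. 0 \<le> b i \<and> b i \<le> L i) \<and> z = (\<Sum>i=1..Suc j. b i * q i)"
    proof -
      have A: "\<forall>i\<in>{1..Suc j}. 0 \<le> b2 i \<and> b2 i \<le> L i"
      proof
        fix i assume "i \<in> {1..Suc j}"
        then show "0 \<le> b2 i \<and> b2 i \<le> L i" using b(1) c0' cL unfolding b2_def L'_def
          by (cases "i = Suc j") auto
      qed
      have B: "z = (\<Sum>i=1..Suc j. b2 i * q i)" using s2 b(2) unfolding b2_def \<beta>_def by simp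
      show ?thesis using A B by blast
    qed
  qed
qed

end

theorem lemma4p1:
  fixes k :: nat and q C D :: "nat \<Rightarrow> int"
  assumes "k \<ge> 2"
    and "\<And>i. i \<in> {1..k} \<Longrightarrow> q i > 0"
    and "\<And>i. i \<in> {1..k} \<Longrightarrow> D i - C i \<ge> Max (q ` {1..k})"
  defines "r \<equiv> Gcd (q ` {1..k})"
    and "A \<equiv> {(\<Sum>i=1..k. a i * q i) | a :: nat \<Rightarrow> int. \<forall>i\<in>{1..k}. C i \<le> a i \<and> a i \<le> D i}"
    and "CC \<equiv> (\<Sum>i=1..k. C i * q i)"
    and "DD \<equiv> (\<Sum>i=1..k. D i * q i)"
    and "S \<equiv> (\<Sum>i=1..k-1. q i * q (i+1))"
  shows "(A \<subseteq> {m * r | m :: int. real_of_int CC / real_of_int r \<le> real_of_int m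
                                   \<and> real_of_int m \<le> real_of_int DD / real_of_int r}) \<and>
         ({m * r | m :: int. real_of_int CC / real_of_int r + real_of_int S / (real_of_int r)^2 \<le> real_of_int m
                          \<and> real_of_int m \<le> real_of_int DD / real_of_int r - real_of_int S / (real_of_int r)^2} \<subseteq> A)"
proof -
  define Q where "Q = Max (q ` {1..k})"
  define L where "L = (\<lambda>i. D i - C i)"
  have k1: "1 \<le> k" using assms(1) by simp
  have qpos: "\<And>i. i \<in> {1..k} \<Longrightarrow> q i > 0" using assms(2) by blast
  have qle: "\<And>i. i \<in> {1..k} \<Longrightarrow> q i \<le> Q" unfolding Q_def by (intro Max_ge) auto
  have Lge: "\<And>i. i \<in> {1..k} \<Longrightarrow> L i \<ge> Q" unfolding L_def Q_def using assms(3) by auto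
  have rdef: "r = rr q k" unfolding r_def rr_def by simp
  have rprops: "r > 0" "\<And>i. i \<in> {1..k} \<Longrightarrow> r dvd q i"
    using rr_props[where q=q and L=L and Q=Q and k=k, OF qpos qle Lge k1 order_refl] unfolding rdef by auto
  have rR: "real_of_int r > 0" using rprops by simp
  have rCC: "r dvd CC" unfolding CC_def using rprops(2) by (intro dvd_sum) auto
  have part1: "A \<subseteq> {m * r | m :: int. real_of_int CC / real_of_int r \<le> real_of_int m
                                   \<and> real_of_int m \<le> real_of_int DD / real_of_int r}"
  proof
    fix x assume "x \<in> A"
    then obtain a where x: "x = (\<Sum>i=1..k. a i * q i)" and ab: "\<forall>i\<in>{1..k}. C i \<le> a i \<and> a i \<le> D i"
      unfolding A_def by auto
    have rx: "r dvd x" unfolding x using rprops(2) by (intro dvd_sum) auto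
    then obtain m where m: "x = r * m" by auto
    have "CC \<le> x" unfolding CC_def x
      using ab qpos by (intro sum_mono mult_right_mono) (auto intro: less_imp_le)
    then have "CC \<le> m * r" using m by (simp add: mult.commute)
    then have "real_of_int CC \<le> real_of_int (m * r)" by (simp only: of_int_le_iff)
    then have "real_of_int CC \<le> real_of_int m * real_of_int r" by simp
    then have h1: "real_of_int CC / real_of_int r \<le> real_of_int m" using rR by (simp add: pos_divide_le_eq)
    have "x \<le> DD" unfolding DD_def x
      using ab qpos by (intro sum_mono mult_right_mono) (auto intro: less_imp_le)
    then have "m * r \<le> DD" using m by (simp add: mult.commute)
    then have "real_of_int (m * r) \<le> real_of_int DD" by (simp only: of_int_le_iff)
    then have "real_of_int m * real_of_int r \<le> real_of_int DD" by simp
    then have h2: "real_of_int m \<le> real_of_int DD / real_of_int r" using rR by (simp add: pos_le_divide_eq)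
    show "x \<in> {m * r | m :: int. real_of_int CC / real_of_int r \<le> real_of_int m
                                   \<and> real_of_int m \<le> real_of_int DD / real_of_int r}"
      using h1 h2 m by (auto simp: mult.commute)
  qed
  have part2: "{m * r | m :: int. real_of_int CC / real_of_int r + real_of_int S / (real_of_int r)^2 \<le> real_of_int m
                          \<and> real_of_int m \<le> real_of_int DD / real_of_int r - real_of_int S / (real_of_int r)^2} \<subseteq> A"
  proof
    fix x assume "x \<in> {m * r | m :: int. real_of_int CC / real_of_int r + real_of_int S / (real_of_int r)^2 \<le> real_of_int m
                          \<and> real_of_int m \<le> real_of_int DD / real_of_int r - real_of_int S / (real_of_int r)^2}"
    then obtain m where x: "x = m * r" and H1: "real_of_int CC / real_of_int r + real_of_int S / (real_of_int r)^2 \<le> real_of_int m"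
      and H2: "real_of_int m \<le> real_of_int DD / real_of_int r - real_of_int S / (real_of_int r)^2" by auto
    define R where "R = real_of_int r"
    have R0: "R > 0" using rR unfolding R_def .
    have "(real_of_int CC / R + real_of_int S / R^2) * R^2 \<le> real_of_int m * R^2"
      using H1 unfolding R_def[symmetric] by (intro mult_right_mono) auto
    moreover have "(real_of_int CC / R + real_of_int S / R^2) * R^2 = real_of_int CC * R + real_of_int S"
      using R0 by (simp add: field_simps power2_eq_square)
    moreover have "real_of_int m * R^2 = real_of_int m * R * R" by (simp add: power2_eq_square)
    ultimately have "real_of_int CC * R + real_of_int S \<le> real_of_int m * R * R" by simp
    then have "real_of_int (CC * r + S) \<le> real_of_int (m * r * r)" unfolding R_def by simp
    then have I1: "CC * r + S \<le> m * r * r" by linarith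
    have "real_of_int m * R^2 \<le> (real_of_int DD / R - real_of_int S / R^2) * R^2"
      using H2 unfolding R_def[symmetric] by (intro mult_right_mono) auto
    moreover have "(real_of_int DD / R - real_of_int S / R^2) * R^2 = real_of_int DD * R - real_of_int S"
      using R0 by (simp add: field_simps power2_eq_square)
    moreover have "real_of_int m * R^2 = real_of_int m * R * R" by (simp add: power2_eq_square)
    ultimately have "real_of_int m * R * R \<le> real_of_int DD * R - real_of_int S" by simp
    then have "real_of_int (m * r * r) \<le> real_of_int (DD * r - S)" unfolding R_def by simp
    then have I2: "m * r * r \<le> DD * r - S" by linarith
    define N where "N = m * r - CC"
    have linv: "lo q k * rr q k \<le> (\<Sum>i=1..k-1. q i * q (i+1))"
      using lo_inv[where q=q and L=L and Q=Q and k=k, OF qpos qle Lge k1] by auto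
    then have linv': "lo q k * r \<le> S" unfolding S_def rdef .
    have "N * r \<ge> S" unfolding N_def using I1 by (simp add: algebra_simps)
    then have "lo q k * r \<le> N * r" using linv' by linarith
    then have N1: "lo q k \<le> N" using rprops(1) by (simp add: mult_le_cancel_right)
    have "(DD - m * r) * r \<ge> S" using I2 by (simp add: algebra_simps)
    then have "lo q k * r \<le> (DD - m * r) * r" using linv' by linarith
    then have N2': "lo q k \<le> DD - m * r" using rprops(1) by (simp add: mult_le_cancel_right)
    have Teq: "(\<Sum>i=1..k. L i * q i) = DD - CC" unfolding L_def DD_def CC_def
      by (simp add: sum_subtractf[symmetric] algebra_simps)
    have N2: "N \<le> (\<Sum>i=1..k. L i * q i) - lo q k" unfolding Teq N_def using N2' by linarith
    have N3: "rr q k dvd N" unfolding N_def rdef[symmetric] using rCC by simp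
    obtain b where b: "\<forall>i\<in>{1..k}. 0 \<le> b i \<and> b i \<le> L i" "N = (\<Sum>i=1..k. b i * q i)"
      using main_rep[where q=q and L=L and Q=Q and k=k, OF qpos qle Lge k1] N1 N2 N3 by blast
    define a where "a = (\<lambda>i. C i + b i)"
    have "x = (\<Sum>i=1..k. a i * q i)" unfolding a_def x
      using b(2) N_def CC_def by (simp add: distrib_right sum.distrib)
    moreover have "\<forall>i\<in>{1..k}. C i \<le> a i \<and> a i \<le> D i" using b(1) unfolding a_def L_def by auto
    ultimately show "x \<in> A" unfolding A_def by blast
  qed
  show ?thesis using part1 part2 by blast
qed

end
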